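(* Let $d,k\in\mathbb{N}$ with $k\ge2$ and $d>2k$, and put $n=d-2k$. Let $\phi=\alpha\phi_1+\beta\phi_2$ with $\alpha,\beta>0$. Then every $\mathbf{z}\in\Lambda_1$ with $\phi[\mathbf{z}]=\min\{\phi[\mathbf{u}]:\mathbf{u}\in\Lambda_1\}$ can be written as $$\mathbf{z}=\operatorname{sgn}(l)\,\chi_S+\frac{a}{n}\mathbf{j}$$ for some integers $l,a$ with $-\frac d2\le l<\frac d2$ and some $S\subseteq\{1,\dots,d\}$ with $|S|=|l|$ (i.e. up to a permutation of coordinates $\mathbf{z}=\operatorname{sgn}(l)[1^{|l|},0^{d-|l|}]+\frac an\mathbf{j}$). Moreover, each such minimal $\mathbf{z}$ has only one representation of this type.
   Context: $\mathbf{e}_1,\dots,\mathbf{e}_d$ is the standard basis of $\mathbb{R}^d$, $\mathbf{j}=(1,\dots,1)$, $\chi_S$ the indicator vector of $S$, and $\operatorname{sgn}(0)=0$. $L^1$ is the set of vectors in $\mathbb{Z}^d$ with $k$ coordinates $-1$ and $d-k$ coordinates $1$; $\Lambda$ is the $\mathbb{Z}$-span of $\mathbf{e}_1,\dots,\mathbf{e}_d,\frac{\mathbf{j}}{n}$; $\Lambda_1=\{\mathbf{z}\in\Lambda:\ \mathbf{z}\cdot\boldsymbol{\ell}\equiv1\pmod2\ \forall\boldsymbol{\ell}\in L^1\}$. $\phi_1[\mathbf{x}]=(\sum_ix_i)^2$, $\phi_2[\mathbf{x}]=\bigl|\mathbf{x}-\frac{\sum_ix_i}{d}\mathbf{j}\bigr|^2$.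 *)

theory Defs
  imports Complex_Main
begin

text \<open>Vectors of R^d are represented as functions nat => real supported on the
index set {1..d}.\<close>

definition jvec :: "nat \<Rightarrow> nat \<Rightarrow> real" where
  "jvec d = (\<lambda>i. if i \<in> {1..d} then 1 else 0)"

definition chi :: "nat \<Rightarrow> nat set \<Rightarrow> nat \<Rightarrow> real" where
  "chi d S = (\<lambda>i. if i \<in> {1..d} \<and> i \<in> S then 1 else 0)"

definition dotv :: "nat \<Rightarrow> (nat \<Rightarrow> real) \<Rightarrow> (nat \<Rightarrow> real) \<Rightarrow> real" where
  "dotv d x y = (\<Sum>i=1..d. x i * y i)"

definition L1 :: "nat \<Rightarrow> nat \<Rightarrow> (nat \<Rightarrow> real) set" where
  "L1 d k = {l. (\<forall>i. i \<notin> {1..d} \<longrightarrow> l i = 0) \<and>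
                (\<forall>i\<in>{1..d}. l i = 1 \<or> l i = -1) \<and>
                card {i\<in>{1..d}. l i = -1} = k}"

text \<open>Lambda: the Z-span of e_1,...,e_d and j/n.\<close>
definition Lam :: "nat \<Rightarrow> nat \<Rightarrow> (nat \<Rightarrow> real) set" where
  "Lam d n = {z. \<exists>c :: nat \<Rightarrow> int. \<exists>m :: int.
      z = (\<lambda>i. if i \<in> {1..d} then real_of_int (c i) + real_of_int m / real n else 0)}"

definition Lam1 :: "nat \<Rightarrow> nat \<Rightarrow> (nat \<Rightarrow> real) set" where
  "Lam1 d k = {z \<in> Lam d (d - 2*k). \<forall>l\<in>L1 d k. \<exists>m::int. dotv d z l = 2 * real_of_int m + 1}"

definition phi1 :: "nat \<Rightarrow> (nat \<Rightarrow> real) \<Rightarrow> real" where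
  "phi1 d x = (\<Sum>i=1..d. x i)^2"

definition phi2 :: "nat \<Rightarrow> (nat \<Rightarrow> real) \<Rightarrow> real" where
  "phi2 d x = (\<Sum>i=1..d. (x i - (\<Sum>j=1..d. x j) / real d)^2)"

end

theory Submission
  imports Defs
begin

lemma sum_two_change:
  fixes f g :: "nat \<Rightarrow> real"
  assumes "finite A" "p \<in> A" "q \<in> A" "p \<noteq> q" "\<forall>i\<in>A-{p,q}. f i = g i"
  shows "sum g A = sum f A + (g p - f p) + (g q - f q)"
proof -
  have "sum f A = f p + f q + sum f (A - {p,q})"
    using assms by (simp add: sum.remove[of A p] sum.remove[of "A-{p}" q] Diff_insert2[symmetric] insert_commute)
  moreover have "sum g A = g p + g q + sum g (A - {p,q})"
    using assms by (simp add: sum.remove[of A p] sum.remove[of "A-{p}" q] Diff_insert2[symmetric] insert_commute)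
  moreover have "sum f (A - {p,q}) = sum g (A - {p,q})"
    using assms(5) by (intro sum.cong) auto
  ultimately show ?thesis by simp
qed

definition repr :: "nat \<Rightarrow> nat \<Rightarrow> int \<Rightarrow> int \<Rightarrow> nat set \<Rightarrow> nat \<Rightarrow> real" where
  "repr d n l a S = (\<lambda>i. real_of_int (sgn l) * chi d S i + real_of_int a / real n * jvec d i)"

lemma sum_chi:
  assumes "S \<subseteq> {1..d}"
  shows "(\<Sum>i=1..d. chi d S i) = real (card S)"
proof -
  have "(\<Sum>i=1..d. chi d S i) = (\<Sum>i\<in>{1..d}. if i \<in> S then 1 else 0)"
    by (intro sum.cong) (auto simp: chi_def)
  also have "\<dots> = real (card ({1..d} \<inter> S))"
    by (simp add: sum.If_cases)
  also have "{1..d} \<inter> S = S" using assms by auto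
  finally show ?thesis .
qed

lemma rep_unique:
  assumes n: "n > 0" and d: "d > 0"
    and v1: "- int d \<le> 2 * l1" "2 * l1 < int d" "S1 \<subseteq> {1..d}" "card S1 = nat \<bar>l1\<bar>"
    and v2: "- int d \<le> 2 * l2" "2 * l2 < int d" "S2 \<subseteq> {1..d}" "card S2 = nat \<bar>l2\<bar>"
    and eq: "repr d n l1 a1 S1 = repr d n l2 a2 S2"
  shows "(l1, a1, S1) = (l2, a2, S2)"
proof -
  have sumr: "(\<Sum>i=1..d. repr d n l a S i) = real_of_int l + real d * (real_of_int a / real n)"
    if "S \<subseteq> {1..d}" "card S = nat \<bar>l\<bar>" for l a S
  proof -
    have "(\<Sum>i=1..d. repr d n l a S i) = real_of_int (sgn l) * (\<Sum>i=1..d. chi d S i)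
          + real_of_int a / real n * (\<Sum>i=1..d. jvec d i)"
      by (simp add: repr_def sum.distrib sum_distrib_left)
    also have "(\<Sum>i=1..d. jvec d i) = real d" by (simp add: jvec_def)
    also have "(\<Sum>i=1..d. chi d S i) = real (card S)" using sum_chi[OF that(1)] .
    also have "real_of_int (sgn l) * real (card S) = real_of_int l"
      using that(2) by (cases "l > 0"; cases "l = 0") (auto simp: sgn_if)
    finally show ?thesis by simp
  qed
  have s: "real_of_int l1 + real d * (real_of_int a1 / real n) = real_of_int l2 + real d * (real_of_int a2 / real n)"
  proof -
    have "(\<Sum>i=1..d. repr d n l1 a1 S1 i) = (\<Sum>i=1..d. repr d n l2 a2 S2 i)" using eq by simp
    thus ?thesis using sumr[OF v1(3,4), of a1] sumr[OF v2(3,4), of a2] by simp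
  qed
  define ci :: int where "ci = sgn l1 * (if 1 \<in> S1 then 1 else 0) - sgn l2 * (if 1 \<in> S2 then 1 else 0)"
  have "repr d n l1 a1 S1 1 = repr d n l2 a2 S2 1" using eq by simp
  hence c1: "real_of_int a2 / real n - real_of_int a1 / real n = real_of_int ci"
    using d by (cases "1 \<in> S1"; cases "1 \<in> S2") (auto simp: repr_def chi_def jvec_def ci_def algebra_simps)
  have "real_of_int (l1 - l2) = real d * (real_of_int a2 / real n - real_of_int a1 / real n)"
    using s by (simp only: of_int_diff right_diff_distrib)
  also have "\<dots> = real d * real_of_int ci" using c1 by simp
  finally have "real_of_int (l1 - l2) = real d * real_of_int ci" .
  hence li: "l1 - l2 = int d * ci" by (metis of_int_eq_iff of_int_mult of_int_of_nat_eq)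
  have "ci = 0"
  proof (rule ccontr)
    assume "ci \<noteq> 0"
    hence "\<bar>ci\<bar> \<ge> 1" by simp
    hence "\<bar>int d * ci\<bar> \<ge> int d" using mult_left_mono[of 1 "\<bar>ci\<bar>" "int d"] by (simp add: abs_mult)
    thus False using li v1 v2 by linarith
  qed
  hence a: "a1 = a2" using c1 n by (simp add: divide_simps)
  have l: "l1 = l2" using li \<open>ci = 0\<close> by simp
  have S: "S1 = S2"
  proof (cases "l1 = 0")
    case True
    then show ?thesis using v1 v2 l
      by (metis card_0_eq finite_atLeastAtMost finite_subset nat_zero_as_int abs_0)
  next
    case False
    have "\<forall>i\<in>{1..d}. (i \<in> S1) = (i \<in> S2)"
    proof
      fix i assume i: "i \<in> {1..d}"
      have "repr d n l1 a1 S1 i = repr d n l2 a2 S2 i" using eq by simp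
      thus "(i \<in> S1) = (i \<in> S2)" using i a l False
        by (auto simp: repr_def chi_def jvec_def sgn_if split: if_splits)
    qed
    then show ?thesis using v1 v2 by blast
  qed
  show ?thesis using a l S by simp
qed

theorem lemma2:
  fixes d k :: nat and \<alpha> \<beta> :: real and z :: "nat \<Rightarrow> real"
  assumes "k \<ge> 2" and "d > 2 * k"
    and "\<alpha> > 0" and "\<beta> > 0"
    and "z \<in> Lam1 d k"
    and "\<forall>u\<in>Lam1 d k. \<alpha> * phi1 d z + \<beta> * phi2 d z \<le> \<alpha> * phi1 d u + \<beta> * phi2 d u"
  shows "\<exists>!(l, a, S). - int d \<le> 2 * (l::int) \<and> 2 * l < int d \<and>
           S \<subseteq> {1..d} \<and> card (S::nat set) = nat \<bar>l\<bar> \<and>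
           z = (\<lambda>i. real_of_int (sgn l) * chi d S i
                     + real_of_int (a::int) / real (d - 2 * k) * jvec d i)"
proof -
  define n where "n = d - 2 * k"
  have n0: "n > 0" and d0: "d > 0" using assms(2) by (auto simp: n_def)
  have zL: "z \<in> Lam d n" and zodd: "\<forall>l\<in>L1 d k. \<exists>m::int. dotv d z l = 2 * real_of_int m + 1"
    using assms(5) by (auto simp: Lam1_def n_def)
  obtain c :: "nat \<Rightarrow> int" and m :: int where
    zdef: "z = (\<lambda>i. if i \<in> {1..d} then real_of_int (c i) + real_of_int m / real n else 0)"
    using zL by (auto simp: Lam_def)
  have bnd: "c p \<le> c q + 1" if p: "p \<in> {1..d}" and q: "q \<in> {1..d}" for p q
  proof (rule ccontr)
    assume "\<not> c p \<le> c q + 1"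
    hence big: "c p \<ge> c q + 2" by simp
    hence pq: "p \<noteq> q" by auto
    define c' where "c' = c(p := c p - 1, q := c q + 1)"
    define u where "u = (\<lambda>i. if i \<in> {1..d} then real_of_int (c' i) + real_of_int m / real n else 0)"
    have up: "u p = z p - 1" and uq: "u q = z q + 1" and uo: "\<And>i. i \<noteq> p \<Longrightarrow> i \<noteq> q \<Longrightarrow> u i = z i"
      using p q pq by (auto simp: u_def zdef c'_def)
    have uL: "u \<in> Lam d n" unfolding Lam_def u_def by blast
    have "\<forall>l\<in>L1 d k. \<exists>m::int. dotv d u l = 2 * real_of_int m + 1"
    proof
      fix l assume lL: "l \<in> L1 d k"
      obtain m1 :: int where m1: "dotv d z l = 2 * real_of_int m1 + 1" using zodd lL by blast
      have lp: "l p = 1 \<or> l p = -1" and lq: "l q = 1 \<or> l q = -1" using lL p q by (auto simp: L1_def)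
      have "dotv d u l = dotv d z l + (u p * l p - z p * l p) + (u q * l q - z q * l q)"
        unfolding dotv_def using p q pq uo
        by (intro sum_two_change) auto
      hence "dotv d u l = dotv d z l - l p + l q" using up uq by (simp add: algebra_simps)
      hence e: "dotv d u l = 2 * real_of_int m1 + 1 - l p + l q" using m1 by simp
      show "\<exists>m::int. dotv d u l = 2 * real_of_int m + 1"
        using lp lq
      proof (elim disjE)
        assume "l p = 1" "l q = 1" thus ?thesis using e by (intro exI[of _ m1]) simp
      next
        assume "l p = 1" "l q = -1" thus ?thesis using e by (intro exI[of _ "m1 - 1"]) simp
      next
        assume "l p = -1" "l q = 1" thus ?thesis using e by (intro exI[of _ "m1 + 1"]) simp
      next
        assume "l p = -1" "l q = -1" thus ?thesis using e by (intro exI[of _ m1]) simp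
      qed
    qed
    hence uL1: "u \<in> Lam1 d k" using uL by (simp add: Lam1_def n_def)
    have su: "(\<Sum>i=1..d. u i) = (\<Sum>i=1..d. z i)"
    proof -
      have "(\<Sum>i=1..d. u i) = (\<Sum>i=1..d. z i) + (u p - z p) + (u q - z q)"
        using p q pq uo by (intro sum_two_change) auto
      thus ?thesis using up uq by simp
    qed
    have ph1: "phi1 d u = phi1 d z" unfolding phi1_def su by (rule refl)
    define M where "M = (\<Sum>j=1..d. z j) / real d"
    have "phi2 d u = (\<Sum>i=1..d. (u i - M)^2)" unfolding phi2_def su M_def by (rule refl)
    also have "\<dots> = (\<Sum>i=1..d. (z i - M)^2) + ((u p - M)^2 - (z p - M)^2) + ((u q - M)^2 - (z q - M)^2)"
      using p q pq uo by (intro sum_two_change) auto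
    also have "\<dots> = phi2 d z + 2 - 2 * (z p - z q)"
      unfolding phi2_def M_def[symmetric] by (simp add: up uq power2_eq_square algebra_simps)
    finally have ph2e: "phi2 d u = phi2 d z + 2 - 2 * (z p - z q)" .
    have "z p - z q = real_of_int (c p - c q)" using p q by (simp add: zdef)
    moreover have "real_of_int (c p - c q) \<ge> 2" using big by linarith
    ultimately have "phi2 d u < phi2 d z" using ph2e by (smt (verit))
    hence "\<beta> * phi2 d u < \<beta> * phi2 d z" using assms(4) by simp
    thus False using assms(6) uL1 ph1 by fastforce
  qed
  define b where "b = Min (c ` {1..d})"
  have ble: "\<And>i. i \<in> {1..d} \<Longrightarrow> b \<le> c i" by (simp add: b_def)
  obtain i0 where i0: "i0 \<in> {1..d}" "c i0 = b"
  proof -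
    have "b \<in> c ` {1..d}" unfolding b_def using d0 by (intro Min_in) auto
    thus ?thesis using that by blast
  qed
  have two: "\<And>i. i \<in> {1..d} \<Longrightarrow> c i = b \<or> c i = b + 1"
    using ble bnd i0 by force
  define T where "T = {i\<in>{1..d}. c i = b + 1}"
  have Tsub: "T \<subseteq> {1..d}" by (auto simp: T_def)
  have finT: "finite T" using Tsub finite_subset by blast
  have cardT: "card T \<le> d" using card_mono[OF _ Tsub] by simp
  have zi: "z i = chi d T i + real_of_int b + real_of_int m / real n" if "i \<in> {1..d}" for i
    using two[OF that] that by (auto simp: zdef chi_def T_def)
  have E: "\<exists>l a S. - int d \<le> 2 * (l::int) \<and> 2 * l < int d \<and>
           S \<subseteq> {1..d} \<and> card (S::nat set) = nat \<bar>l\<bar> \<and>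
           z = repr d n l a S"
  proof (cases "2 * card T < d")
    case True
    define l where "l = int (card T)"
    have sg: "real_of_int (sgn l) * chi d T i = chi d T i" for i
    proof (cases "card T = 0")
      case True thus ?thesis using finT by (simp add: chi_def l_def)
    next
      case False thus ?thesis by (simp add: l_def)
    qed
    have "z = repr d n l (b * int n + m) T"
    proof
      fix i show "z i = repr d n l (b * int n + m) T i"
      proof (cases "i \<in> {1..d}")
        case True
        thus ?thesis using zi[OF True] sg n0
          by (simp add: repr_def jvec_def field_simps)
      next
        case False
        hence "z i = 0" and "repr d n l x S' i = 0" for x S' by (auto simp: zdef repr_def chi_def jvec_def)
        thus ?thesis by simp
      qed
    qed
    thus ?thesis using True Tsub by (intro exI[of _ l] exI[of _ "b * int n + m"] exI[of _ T]) (simp add: l_def)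
  next
    case False
    define l where "l = int (card T) - int d"
    define S where "S = {1..d} - T"
    have cS: "card S = d - card T" unfolding S_def using Tsub finT by (simp add: card_Diff_subset)
    have sg: "real_of_int (sgn l) * chi d S i = - chi d S i" for i
    proof (cases "card T = d")
      case True
      hence "T = {1..d}" using Tsub by (simp add: card_subset_eq)
      thus ?thesis by (simp add: chi_def S_def)
    next
      case False thus ?thesis using cardT by (simp add: l_def)
    qed
    have chiS: "chi d S i = 1 - chi d T i" if "i \<in> {1..d}" for i
      using that by (simp add: chi_def S_def)
    have "z = repr d n l ((b + 1) * int n + m) S"
    proof
      fix i show "z i = repr d n l ((b + 1) * int n + m) S i"
      proof (cases "i \<in> {1..d}")
        case True
        have e1: "real_of_int (sgn l) * chi d S i = chi d T i - 1" using sg[of i] chiS[OF True] by simp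
        have j: "jvec d i = 1" using True by (simp add: jvec_def)
        have e2: "real_of_int ((b+1)*int n + m) / real n = real_of_int b + 1 + real_of_int m / real n"
          using n0 by (simp add: field_simps)
        have "repr d n l ((b + 1) * int n + m) S i = chi d T i - 1 + (real_of_int b + 1 + real_of_int m / real n)"
          unfolding repr_def j e1 e2 by simp
        thus ?thesis using zi[OF True] by simp
      next
        case False
        hence "z i = 0" and "repr d n l x S' i = 0" for x S' by (auto simp: zdef repr_def chi_def jvec_def)
        thus ?thesis by simp
      qed
    qed
    moreover have "card S = nat \<bar>l\<bar>" using cS cardT by (simp add: l_def)
    ultimately show ?thesis using False cardT d0
      by (intro exI[of _ l] exI[of _ "(b + 1) * int n + m"] exI[of _ S]) (auto simp: l_def S_def)
  qed
  then obtain l0 a0 S0 where P0: "- int d \<le> 2 * (l0::int) \<and> 2 * l0 < int d \<and>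
           S0 \<subseteq> {1..d} \<and> card (S0::nat set) = nat \<bar>l0\<bar> \<and> z = repr d n l0 a0 S0" by blast
  show ?thesis
  proof (rule ex1I[of _ "(l0, a0, S0)"])
    show "case (l0, a0, S0) of (l, a, S) \<Rightarrow> - int d \<le> 2 * (l::int) \<and> 2 * l < int d \<and>
           S \<subseteq> {1..d} \<and> card (S::nat set) = nat \<bar>l\<bar> \<and>
           z = (\<lambda>i. real_of_int (sgn l) * chi d S i
                     + real_of_int (a::int) / real (d - 2 * k) * jvec d i)"
      using P0 by (simp add: repr_def n_def)
  next
    fix y assume "case y of (l, a, S) \<Rightarrow> - int d \<le> 2 * (l::int) \<and> 2 * l < int d \<and>
           S \<subseteq> {1..d} \<and> card (S::nat set) = nat \<bar>l\<bar> \<and>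
           z = (\<lambda>i. real_of_int (sgn l) * chi d S i
                     + real_of_int (a::int) / real (d - 2 * k) * jvec d i)"
    then obtain l1 a1 S1 where y: "y = (l1, a1, S1)" and P1: "- int d \<le> 2 * (l1::int) \<and> 2 * l1 < int d \<and>
           S1 \<subseteq> {1..d} \<and> card (S1::nat set) = nat \<bar>l1\<bar> \<and> z = repr d n l1 a1 S1"
      by (cases y) (auto simp: repr_def n_def)
    show "y = (l0, a0, S0)" unfolding y
      using P0 P1 by (intro rep_unique[OF n0 d0]) auto
  qed
qed

end
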